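(* Let $k \geq 2$ be an integer and $n := 2^k$. Let $R_k$ denote either $R_k(t) := |P_k(e^{it})|^2$ or $R_k(t) := |Q_k(e^{it})|^2$ (the statement holds for each choice). Then the equation $R_k(t) = n$ has at least $n/4 + 1$ distinct zeros in $K$. Moreover, with $t_j := 2\pi j/n$, there are at least $n/2 + 2$ values of $j \in \{0,1,\ldots,n-1\}$ for which the closed interval $[t_j, t_{j+1}]$ contains at least one solution $t$ of $R_k(t) = n$.
   Context: The Rudin-Shapiro polynomials are defined recursively by $P_0(z) := 1$, $Q_0(z) := 1$, and for $k = 0,1,2,\ldots$: $P_{k+1}(z) := P_k(z) + z^{2^k} Q_k(z)$, $Q_{k+1}(z) := P_k(z) - z^{2^k} Q_k(z)$. Thus $P_k$ and $Q_k$ are polynomials of degree $n-1$, $n = 2^k$, with all coefficients in $\{-1,1\}$. $K := \mathbb{R} \pmod{2\pi}$, i.e. zeros are counted on one period $[0,2\pi)$. *)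

theory Defs
  imports "HOL-Analysis.Analysis" "HOL-Computational_Algebra.Polynomial"
begin

text \<open>Rudin-Shapiro pairs (P_k, Q_k) as complex polynomials.\<close>
fun rs_pair :: "nat \<Rightarrow> complex poly \<times> complex poly" where
  "rs_pair 0 = (1, 1)"
| "rs_pair (Suc k) =
     (let (p, q) = rs_pair k
      in (p + monom 1 (2 ^ k) * q, p - monom 1 (2 ^ k) * q))"

definition RS_P :: "nat \<Rightarrow> complex poly" where
  "RS_P k = fst (rs_pair k)"

definition RS_Q :: "nat \<Rightarrow> complex poly" where
  "RS_Q k = snd (rs_pair k)"

definition sqmod_on_circle :: "complex poly \<Rightarrow> real \<Rightarrow> real" where
  "sqmod_on_circle p t = (cmod (poly p (cis t)))\<^sup>2"

end

theory Submission imports Defs begin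

lemma RS_Suc:
  "RS_P (Suc k) = RS_P k + monom 1 (2^k) * RS_Q k"
  "RS_Q (Suc k) = RS_P k - monom 1 (2^k) * RS_Q k"
  by (simp_all add: RS_P_def RS_Q_def split_def Let_def)

lemma RS_deg: "degree (RS_P k) < 2^k \<and> degree (RS_Q k) < 2^k"
proof (induction k)
  case 0
  then show ?case by (simp add: RS_P_def RS_Q_def)
next
  case (Suc k)
  have m: "degree (monom (1::complex) (2^k) * RS_Q k) < 2^Suc k"
    using degree_mult_le[of "monom (1::complex) (2^k)" "RS_Q k"] degree_monom_le[of "1::complex" "2^k"] Suc
    by simp
  have p: "degree (RS_P k) < 2^Suc k" using Suc by (meson order_less_le_trans lessI power_strict_increasing_iff one_less_numeral_iff semiring_norm(76) less_imp_le)
  have "degree (RS_P (Suc k)) < 2^Suc k"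
    unfolding RS_Suc using degree_add_le_max[of "RS_P k" "monom 1 (2^k) * RS_Q k"] m p by simp
  moreover have "degree (RS_Q (Suc k)) < 2^Suc k"
    unfolding RS_Suc using degree_diff_le_max[of "RS_P k" "monom 1 (2^k) * RS_Q k"] m p by simp
  ultimately show ?case by simp
qed

lemma par: "(cmod (a+b))^2 + (cmod (a-b))^2 = 2*(cmod a)^2 + 2*(cmod b)^2"
  unfolding cmod_power2 by (simp add: power2_eq_square algebra_simps)

lemma RS_norm: "cmod z = 1 \<Longrightarrow> (cmod (poly (RS_P k) z))^2 + (cmod (poly (RS_Q k) z))^2 = 2^(Suc k)"
proof (induction k)
  case 0
  then show ?case by (simp add: RS_P_def RS_Q_def)
next
  case (Suc k)
  have "cmod (z^(2^k) * poly (RS_Q k) z) = cmod (poly (RS_Q k) z)"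
    using Suc.prems by (simp add: norm_mult norm_power)
  then show ?case using Suc par[of "poly (RS_P k) z" "z^(2^k) * poly (RS_Q k) z"]
    by (simp add: RS_Suc poly_monom)
qed

lemma grid_pow: "(cis (2*pi*real i / real ((2::nat)^(j+2)))) ^ (2^(j+1)) = (-1)^i"
proof -
  have eq: "real ((2::nat)^(j+1)) * (2*pi*real i / real ((2::nat)^(j+2))) = real i * pi"
    by (simp add: field_simps)
  have "(cis (2*pi*real i / real ((2::nat)^(j+2)))) ^ (2^(j+1)) = cis (real ((2::nat)^(j+1)) * (2*pi*real i / real ((2::nat)^(j+2))))"
    by (rule Complex.DeMoivre)
  also have "\<dots> = cis (real i * pi)" by (simp only: eq)
  also have "\<dots> = cis pi ^ i" by (simp only: Complex.DeMoivre)
  finally show ?thesis by simp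
qed

lemma cont_sq: "continuous_on UNIV (\<lambda>s. (cmod (poly q (cis s)))^2)"
  by (intro continuous_intros)

lemma pt:
  fixes z :: complex
  assumes z: "cmod z = 1" and u: "(z^(2^j))^2 = (-1)^i"
  shows "(cmod (poly (RS_P (j+2)) z))^2 - 2^(j+2) = (-1)^i * ((cmod (poly (smult 2 (RS_P j)) z))^2 - 2^(j+2))"
    and "(cmod (poly (RS_Q (j+2)) z))^2 - 2^(j+2) = (-1)^i * ((cmod (poly (smult 2 (RS_Q j)) z))^2 - 2^(j+2))"
proof -
  define a where "a = poly (RS_P j) z"
  define b where "b = poly (RS_Q j) z"
  define u where "u = z^(2^j)"
  have cu: "cmod u = 1" using z by (simp add: u_def norm_power)
  have nab: "(cmod a)^2 + (cmod b)^2 = 2^(Suc j)" using RS_norm[OF z] by (simp add: a_def b_def)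
  have v: "z^(2^Suc j) = u^2" by (metis power_Suc power_mult mult.commute u_def)
  have v2: "z^(2*2^j) = (z^(2^j))^2" by (metis power_mult mult.commute)
  have PP: "poly (RS_P (j+2)) z = (a + u*b) + u^2 * (a - u*b)"
    by (simp add: RS_Suc poly_monom a_def b_def u_def v[unfolded u_def] v2)
  have QQ: "poly (RS_Q (j+2)) z = (a + u*b) - u^2 * (a - u*b)"
    by (simp add: RS_Suc poly_monom a_def b_def u_def v[unfolded u_def] v2)
  have u2: "u^2 = (-1)^i" using u by (simp add: u_def)
  have "(cmod (poly (RS_P (j+2)) z))^2 - 2^(j+2) = (-1)^i * ((cmod (poly (smult 2 (RS_P j)) z))^2 - 2^(j+2))
     \<and> (cmod (poly (RS_Q (j+2)) z))^2 - 2^(j+2) = (-1)^i * ((cmod (poly (smult 2 (RS_Q j)) z))^2 - 2^(j+2))"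
  proof (cases "even i")
    case True
    then have "u^2 = 1" using u2 by simp
    then have "poly (RS_P (j+2)) z = 2*a" "poly (RS_Q (j+2)) z = u*(2*b)" using PP QQ by (simp_all add: algebra_simps)
    then show ?thesis using True cu by (simp add: a_def b_def norm_mult)
  next
    case False
    then have "u^2 = -1" using u2 by simp
    then have "poly (RS_P (j+2)) z = u*(2*b)" "poly (RS_Q (j+2)) z = 2*a" using PP QQ by (simp_all add: algebra_simps)
    then show ?thesis using False cu nab by (simp add: a_def b_def norm_mult power_mult_distrib algebra_simps)
  qed
  then show "(cmod (poly (RS_P (j+2)) z))^2 - 2^(j+2) = (-1)^i * ((cmod (poly (smult 2 (RS_P j)) z))^2 - 2^(j+2))"
    and "(cmod (poly (RS_Q (j+2)) z))^2 - 2^(j+2) = (-1)^i * ((cmod (poly (smult 2 (RS_Q j)) z))^2 - 2^(j+2))"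
    by auto
qed

lemma ivt0:
  fixes f :: "real \<Rightarrow> real"
  assumes "continuous_on {a..b} f" "a \<le> b" "f a * f b \<le> 0"
  shows "\<exists>x. a \<le> x \<and> x \<le> b \<and> f x = 0"
proof -
  from assms(3) have "(0 \<le> f a \<and> f b \<le> 0) \<or> (f a \<le> 0 \<and> 0 \<le> f b)" by (simp add: mult_le_0_iff)
  then show ?thesis using IVT'[of f a 0 b] IVT2'[of f b 0 a] assms(1,2) by auto
qed

lemma cis_inj_open:
  assumes "0 < a" "a < 2*pi" "0 < b" "b < 2*pi" "cis a = cis b"
  shows "a = b"
proof -
  have ea: "cis (a - pi) = cis a * cis (-pi)" by (simp add: cis_mult)
  have eb: "cis (b - pi) = cis b * cis (-pi)" by (simp add: cis_mult)
  have "cis (a - pi) = cis (b - pi)"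
    using assms(5) ea eb by simp
  then have "Arg (cis (a - pi)) = Arg (cis (b - pi))" by simp
  then have "a - pi = b - pi" using assms by (simp add: Arg_cis)
  then show ?thesis by simp
qed

lemma count_G:
  fixes f :: "real \<Rightarrow> real" and q :: "complex poly" and m n :: nat and c :: real
  assumes n: "n = 4*m" and m: "m \<ge> 1" and cont: "continuous_on UNIV f"
   and dq: "degree q < m"
   and grid: "\<And>i. f (2*pi*real i / real n) = (-1)^i * ((cmod (poly q (cis (2*pi*real i / real n))))^2 - c)"
  shows "card {j \<in> {0..<n}. \<exists>t. 2*pi*real j / real n \<le> t \<and> t \<le> 2*pi*real (j+1)/real n \<and> f t = 0} \<ge> 2*m+2"
proof -
  define t where "t i = 2*pi*real i / real n" for i
  define g where "g s = (cmod (poly q (cis s)))^2 - c" for s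
  define G where "G = {j \<in> {0..<n}. \<exists>s. t j \<le> s \<and> s \<le> t (j+1) \<and> f s = 0}"
  have npos: "n > 0" using n m by simp
  have tmono: "t i < t j" if "i < j" for i j using that npos by (simp add: t_def divide_strict_right_mono)
  have tle: "t i \<le> t j" if "i \<le> j" for i j using that npos by (simp add: t_def divide_right_mono)
  have t0: "t 0 = 0" by (simp add: t_def)
  have tn: "t n = 2*pi" using npos by (simp add: t_def)
  have gcont: "continuous_on A g" for A unfolding g_def by (intro continuous_intros)
  have fg: "f (t i) = (-1)^i * g (t i)" for i using grid by (simp add: t_def g_def)
  define B where "B = {i \<in> {0..<n}. g (t i) * g (t (Suc i)) < 0}"
  have Bsub: "B \<subseteq> {0..<n}" by (auto simp: B_def)
  have sub: "{0..<n} - B \<subseteq> G"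
  proof
    fix i assume "i \<in> {0..<n} - B"
    then have i: "i < n" and ng: "\<not> g (t i) * g (t (Suc i)) < 0" by (auto simp: B_def)
    have "f (t i) * f (t (Suc i)) = - (g (t i) * g (t (Suc i)))" by (simp add: fg)
    then have "f (t i) * f (t (Suc i)) \<le> 0" using ng by simp
    then obtain s where "t i \<le> s" "s \<le> t (Suc i)" "f s = 0"
      using ivt0[of "t i" "t (Suc i)" f] continuous_on_subset[OF cont] tle[of i "Suc i"] by force
    then show "i \<in> G" using i by (auto simp: G_def)
  qed
  have cardB: "card B \<le> 2*m - 2"
  proof -
    define h where "h = q * reflect_poly (map_poly cnj q) - monom (complex_of_real c) (degree q)"
    have d1: "degree (map_poly cnj q) = degree q" by (rule degree_map_poly) simp
    have hval: "poly h (cis s) = cis s ^ degree q * complex_of_real (g s)" for s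
    proof -
      have c1: "cnj (inverse (cis s)) = cis s" by (simp only: cis_inverse cis_cnj minus_minus)
      have c2: "poly (map_poly cnj q) (inverse (cis s)) = cnj (poly q (cis s))"
        by (simp only: poly_map_poly_cnj c1)
      have "poly h (cis s) = poly q (cis s) * (cis s ^ degree q * cnj (poly q (cis s))) - complex_of_real c * cis s ^ degree q"
        unfolding h_def by (simp only: poly_diff poly_mult poly_reflect_poly_nz[OF cis_neq_zero] d1 c2 poly_monom)
      also have "\<dots> = cis s ^ degree q * (poly q (cis s) * cnj (poly q (cis s)) - complex_of_real c)"
        by (simp only: algebra_simps)
      also have "\<dots> = cis s ^ degree q * complex_of_real (g s)"
        by (simp only: g_def complex_norm_square of_real_diff)
      finally show ?thesis .
    qed
    show ?thesis
    proof (cases "h = 0")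
      case True
      then have "g s = 0" for s using hval[of s] by simp
      then have "B = {}" by (auto simp: B_def)
      then show ?thesis by simp
    next
      case False
      define \<tau> where "\<tau> i = (SOME s. t i < s \<and> s < t (Suc i) \<and> g s = 0)" for i
      have \<tau>: "t i < \<tau> i \<and> \<tau> i < t (Suc i) \<and> g (\<tau> i) = 0" if "i \<in> B" for i
      proof -
        from that have gi: "g (t i) * g (t (Suc i)) < 0" by (simp add: B_def)
        then have "g (t i) * g (t (Suc i)) \<le> 0" by simp
        then obtain s where s: "t i \<le> s" "s \<le> t (Suc i)" "g s = 0"
          using ivt0[of "t i" "t (Suc i)" g] gcont tle[of i "Suc i"] by force
        have "s \<noteq> t i" "s \<noteq> t (Suc i)" using s(3) gi by auto
        then have "\<exists>s. t i < s \<and> s < t (Suc i) \<and> g s = 0" using s by force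
        then show ?thesis unfolding \<tau>_def by (rule someI_ex)
      qed
      have range: "0 < \<tau> x \<and> \<tau> x < 2*pi" if "x \<in> B" for x
      proof -
        have "x < n" using that Bsub by auto
        then have "t 0 \<le> t x" "t (Suc x) \<le> t n" using tle by auto
        then show ?thesis using \<tau>[OF that] t0 tn by linarith
      qed
      have inj: "inj_on (\<lambda>i. cis (\<tau> i)) B"
      proof (rule inj_onI)
        fix i j assume ij: "i \<in> B" "j \<in> B" "cis (\<tau> i) = cis (\<tau> j)"
        then have eq: "\<tau> i = \<tau> j" using cis_inj_open range by blast
        show "i = j"
        proof (rule ccontr)
          assume "i \<noteq> j"
          then have "i < j \<or> j < i" by auto
          then show False
          proof
            assume "i < j"
            then have "t (Suc i) \<le> t j" using tle by simp
            then show False using \<tau>[OF ij(1)] \<tau>[OF ij(2)] eq by linarith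
          next
            assume "j < i"
            then have "t (Suc j) \<le> t i" using tle by simp
            then show False using \<tau>[OF ij(1)] \<tau>[OF ij(2)] eq by linarith
          qed
        qed
      qed
      have dh: "degree h \<le> 2 * degree q"
      proof -
        have d1: "degree (map_poly cnj q) = degree q" by (rule degree_map_poly) simp
        have "degree (q * reflect_poly (map_poly cnj q)) \<le> degree q + degree (reflect_poly (map_poly cnj q))"
          by (rule degree_mult_le)
        also have "\<dots> \<le> 2 * degree q" using degree_reflect_poly_le[of "map_poly cnj q"] d1 by simp
        finally have a: "degree (q * reflect_poly (map_poly cnj q)) \<le> 2 * degree q" .
        have b: "degree (monom (complex_of_real c) (degree q)) \<le> 2 * degree q"
          using degree_monom_le[of "complex_of_real c" "degree q"] by simp
        show ?thesis unfolding h_def by (rule degree_diff_le[OF a b])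
      qed
      have "card B = card ((\<lambda>i. cis (\<tau> i)) ` B)" by (simp add: card_image inj)
      also have "\<dots> \<le> card {x. poly h x = 0}"
        by (intro card_mono poly_roots_finite False) (auto simp: hval \<tau>)
      also have "\<dots> \<le> degree h" by (rule card_poly_roots_bound[OF False])
      also have "\<dots> \<le> 2*m - 2" using dh dq by simp
      finally show ?thesis .
    qed
  qed
  have finB: "finite B" using Bsub finite_subset by blast
  have "card ({0..<n} - B) = n - card B" using Bsub finB by (simp add: card_Diff_subset)
  moreover have "card ({0..<n} - B) \<le> card G" by (rule card_mono[OF _ sub]) (auto simp: G_def)
  ultimately have "card G \<ge> 2*m+2" using n cardB m by linarith
  then show ?thesis by (simp add: G_def t_def)
qed

lemma inj_on_lt:
  fixes f :: "nat \<Rightarrow> 'b"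
  assumes "\<And>i j. i \<in> A \<Longrightarrow> j \<in> A \<Longrightarrow> i < j \<Longrightarrow> f i \<noteq> f j"
  shows "inj_on f A"
  by (metis assms inj_onI linorder_neqE_nat)

lemma count_S:
  fixes f :: "real \<Rightarrow> real" and m n :: nat
  assumes n: "n = 4*m" and m: "m \<ge> 1" and per: "f (2*pi) = f 0"
   and G: "card {j \<in> {0..<n}. \<exists>t. 2*pi*real j / real n \<le> t \<and> t \<le> 2*pi*real (j+1)/real n \<and> f t = 0} \<ge> 2*m+2"
  shows "\<exists>S. S \<subseteq> {t. 0 \<le> t \<and> t < 2*pi \<and> f t = 0} \<and> finite S \<and> card S \<ge> m+1"
proof -
  define t where "t i = 2*pi*real i / real n" for i
  define G where "G = {j \<in> {0..<n}. \<exists>s. t j \<le> s \<and> s \<le> t (Suc j) \<and> f s = 0}"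
  have Gc: "card G \<ge> 2*m+2" using G by (simp add: G_def t_def)
  have npos: "n > 0" using n m by simp
  have tmono: "t i < t j" if "i < j" for i j using that npos by (simp add: t_def divide_strict_right_mono)
  have tle: "t i \<le> t j" if "i \<le> j" for i j using that npos by (simp add: t_def divide_right_mono)
  have t0: "t 0 = 0" by (simp add: t_def)
  have tn: "t n = 2*pi" using npos by (simp add: t_def)
  define \<tau> where "\<tau> i = (SOME s. t i \<le> s \<and> s \<le> t (Suc i) \<and> f s = 0)" for i
  have \<tau>: "t i \<le> \<tau> i \<and> \<tau> i \<le> t (Suc i) \<and> f (\<tau> i) = 0" if "i \<in> G" for i
  proof -
    from that have "\<exists>s. t i \<le> s \<and> s \<le> t (Suc i) \<and> f s = 0" by (simp add: G_def)
    then show ?thesis unfolding \<tau>_def by (rule someI_ex)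
  qed
  have GB: "i < n" if "i \<in> G" for i using that by (simp add: G_def)
  define Ge where "Ge = {i \<in> G. even i}"
  define Go where "Go = {i \<in> G. odd i}"
  have finG: "finite G" by (rule finite_subset[of _ "{0..<n}"]) (auto simp: G_def)
  have "card G = card Ge + card Go"
    unfolding Ge_def Go_def using finG by (subst card_Un_disjoint[symmetric]) (auto intro: arg_cong[where f=card])
  then have "card Ge \<ge> m+1 \<or> card Go \<ge> m+1" using Gc by linarith
  then show ?thesis
  proof
    assume ce: "card Ge \<ge> m+1"
    have sub: "\<tau> ` Ge \<subseteq> {t. 0 \<le> t \<and> t < 2*pi \<and> f t = 0}"
    proof
      fix x assume "x \<in> \<tau> ` Ge"
      then obtain i where i: "i \<in> G" "even i" "x = \<tau> i" by (auto simp: Ge_def)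
      have "Suc i < n" using GB[OF i(1)] i(2) n by presburger
      then have "t (Suc i) < 2*pi" using tmono tn by metis
      moreover have "0 \<le> t i" using tle[of 0 i] t0 by simp
      ultimately show "x \<in> {t. 0 \<le> t \<and> t < 2*pi \<and> f t = 0}" using \<tau>[OF i(1)] i(3) by auto
    qed
    have inj: "inj_on \<tau> Ge"
    proof (rule inj_on_lt)
      fix i j assume ij: "i \<in> Ge" "j \<in> Ge" "i < j"
      then have "Suc i < j" by (auto simp: Ge_def) presburger
      then have "t (Suc i) < t j" by (rule tmono)
      then show "\<tau> i \<noteq> \<tau> j" using \<tau>[of i] \<tau>[of j] ij by (auto simp: Ge_def)
    qed
    show ?thesis
      by (rule exI[of _ "\<tau> ` Ge"]) (use sub inj ce finG in \<open>auto simp: card_image Ge_def\<close>)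
  next
    assume co: "card Go \<ge> m+1"
    define \<sigma> where "\<sigma> i = (if \<tau> i = 2*pi then 0 else \<tau> i)" for i
    have t1: "t 1 > 0" using tmono[of 0 1] t0 by simp
    have sub: "\<sigma> ` Go \<subseteq> {t. 0 \<le> t \<and> t < 2*pi \<and> f t = 0}"
    proof
      fix x assume "x \<in> \<sigma> ` Go"
      then obtain i where i: "i \<in> G" "odd i" "x = \<sigma> i" by (auto simp: Go_def)
      have "Suc i \<le> n" using GB[OF i(1)] by simp
      then have "t (Suc i) \<le> 2*pi" using tle tn by metis
      moreover have "0 \<le> t i" using tle[of 0 i] t0 by simp
      ultimately show "x \<in> {t. 0 \<le> t \<and> t < 2*pi \<and> f t = 0}" using \<tau>[OF i(1)] i(3) per
        by (auto simp: \<sigma>_def)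
    qed
    have inj: "inj_on \<sigma> Go"
    proof (rule inj_on_lt)
      fix i j assume ij: "i \<in> Go" "j \<in> Go" "i < j"
      then have "Suc i < j" by (auto simp: Go_def) presburger
      then have a: "t (Suc i) < t j" by (rule tmono)
      have "j < n" using ij GB by (auto simp: Go_def)
      then have "t j \<le> 2*pi" using tle tn by (metis less_imp_le)
      have "1 \<le> i" using ij by (auto simp: Go_def) presburger
      then have b: "t 1 \<le> t i" by (rule tle)
      have ti: "t i \<le> \<tau> i \<and> \<tau> i \<le> t (Suc i)" "t j \<le> \<tau> j" using \<tau>[of i] \<tau>[of j] ij by (auto simp: Go_def)
      have "\<sigma> i = \<tau> i" using ti a \<open>t j \<le> 2*pi\<close> by (auto simp: \<sigma>_def)
      moreover have "\<sigma> j = \<tau> j \<or> \<sigma> j = 0" by (auto simp: \<sigma>_def)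
      ultimately show "\<sigma> i \<noteq> \<sigma> j" using ti a b t1 by auto
    qed
    show ?thesis
      by (rule exI[of _ "\<sigma> ` Go"]) (use sub inj co finG in \<open>auto simp: card_image Go_def\<close>)
  qed
qed

theorem theorem2p1:
  fixes k :: nat and p :: "complex poly"
  assumes "k \<ge> 2"
    and "p \<in> {RS_P k, RS_Q k}"
  shows "(\<exists>S. S \<subseteq> {t. 0 \<le> t \<and> t < 2 * pi \<and> sqmod_on_circle p t = real (2 ^ k)}
              \<and> finite S \<and> real (card S) \<ge> real (2 ^ k) / 4 + 1)
       \<and> real (card {j \<in> {0..<(2::nat) ^ k}. \<exists>t. 2 * pi * real j / real (2 ^ k) \<le> t
                \<and> t \<le> 2 * pi * real (j + 1) / real (2 ^ k)
                \<and> sqmod_on_circle p t = real (2 ^ k)}) \<ge> real (2 ^ k) / 2 + 2"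
proof -
  obtain j where k: "k = j + 2" using assms(1) by (metis add.commute le_Suc_ex)
  define n :: nat where "n = 2^k"
  define m :: nat where "m = 2^j"
  have nm: "n = 4*m" by (simp add: n_def m_def k power_add)
  have m1: "m \<ge> 1" by (simp add: m_def)
  obtain q where dq: "degree q < m" and
    qg: "\<And>i. (cmod (poly p (cis (2*pi*real i / real n))))^2 - 2^(j+2)
        = (-1)^i * ((cmod (poly (smult 2 q) (cis (2*pi*real i / real n))))^2 - 2^(j+2))"
  proof -
    have zz: "cmod (cis (2*pi*real i / real n)) = 1" for i by simp
    have uu: "((cis (2*pi*real i / real n))^(2^j))^2 = (-1)^i" for i
    proof -
      have "((cis (2*pi*real i / real n))^(2^j))^2 = (cis (2*pi*real i / real ((2::nat)^(j+2))))^(2^(j+1))"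
        by (simp add: n_def k flip: power_mult) (simp add: mult.commute)
      then show ?thesis by (simp only: grid_pow)
    qed
    from assms(2) show ?thesis
    proof
      assume "p = RS_P k"
      then show ?thesis using that[of "RS_P j"] pt(1)[OF zz uu] RS_deg[of j] by (simp add: k m_def)
    next
      assume "p \<in> {RS_Q k}"
      then show ?thesis using that[of "RS_Q j"] pt(2)[OF zz uu] RS_deg[of j] by (simp add: k m_def)
    qed
  qed
  define f where "f s = sqmod_on_circle p s - real (2^k)" for s
  have feq: "f s = 0 \<longleftrightarrow> sqmod_on_circle p s = real (2^k)" for s by (simp add: f_def)
  have cont: "continuous_on UNIV f" unfolding f_def sqmod_on_circle_def by (intro continuous_intros)
  have grid: "f (2*pi*real i / real n) = (-1)^i * ((cmod (poly (smult 2 q) (cis (2*pi*real i / real n))))^2 - real (2^(j+2)))" for i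
    using qg[of i] by (simp add: f_def sqmod_on_circle_def k)
  have per: "f (2*pi) = f 0" by (simp add: f_def sqmod_on_circle_def)
  have dq2: "degree (smult 2 q) < m" using dq by simp
  have A: "card {j \<in> {0..<n}. \<exists>t. 2*pi*real j / real n \<le> t \<and> t \<le> 2*pi*real (j+1)/real n \<and> f t = 0} \<ge> 2*m+2"
    by (rule count_G[OF nm m1 cont dq2 grid])
  obtain S where S: "S \<subseteq> {t. 0 \<le> t \<and> t < 2*pi \<and> f t = 0}" "finite S" "card S \<ge> m+1"
    using count_S[OF nm m1 per A] by blast
  have r1: "real (2^k) / 4 + 1 \<le> real (card S)" using S(3) nm by (simp add: n_def[symmetric])
  have r2: "real (2^k) / 2 + 2 \<le> real (card {j \<in> {0..<n}. \<exists>t. 2*pi*real j / real n \<le> t \<and> t \<le> 2*pi*real (j+1)/real n \<and> f t = 0})"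
    using A nm by (simp add: n_def[symmetric])
  show ?thesis
    using S(1,2) r1 r2 unfolding feq n_def by blast
qed

end
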